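(* Let $\lambda=(\lambda_1,\dots,\lambda_N)$ be a partition. The map sending a column-strict tableau $\emptyset=\lambda^{(0)}\subset\lambda^{(1)}\subset\dots\subset\lambda^{(N)}=\lambda$ of shape $\lambda$ to the matrix $\theta$ with $\theta_{i,j}=\lambda^{(j)}_i-\lambda^{(j-1)}_i$ for $i<j$ and $\theta_{i,j}=0$ for $i\ge j$ is a bijection from the set of column-strict tableaux of shape $\lambda$ onto $$\mathsf{Pol}_\lambda=\Big\{\theta\in\mathsf M^{(N)}:0\le\theta_{i,j}\le\lambda_i-\lambda_{i+1}-\sum_{k=j+1}^N(\theta_{i,k}-\theta_{i+1,k})\Big\}.$$
   Context: A column-strict tableau of shape $\lambda$ is a sequence of partitions $\emptyset=\lambda^{(0)}\subset\dots\subset\lambda^{(N)}=\lambda$ such that each skew diagram $\lambda^{(k)}-\lambda^{(k-1)}$ is a horizontal strip (i.e. $\lambda^{(k)}_1\ge\lambda^{(k-1)}_1\ge\lambda^{(k)}_2\ge\lambda^{(k-1)}_2\ge\dots$). $\mathsf M^{(N)}$ is the set of $N\times N$ matrices with entries in $\mathbb Z_{\ge0}$ that vanish on and below the diagonal. $\lambda_{N+1}=0$. *)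

theory Defs
  imports Main
begin

text \<open>A partition with at most N parts: lam :: nat \<Rightarrow> nat, parts lam 1 \<ge> lam 2 \<ge> ...,
  indices start at 1, lam i = 0 for i > N (so lam (N+1) = 0); lam 0 is unused and normalised to 0.\<close>
definition is_partition :: "nat \<Rightarrow> (nat \<Rightarrow> nat) \<Rightarrow> bool" where
  "is_partition N lam \<longleftrightarrow> lam 0 = 0 \<and> (\<forall>i\<ge>1. lam (Suc i) \<le> lam i) \<and> (\<forall>i>N. lam i = 0)"

definition horizontal_strip :: "(nat \<Rightarrow> nat) \<Rightarrow> (nat \<Rightarrow> nat) \<Rightarrow> bool" where
  "horizontal_strip mu nu \<longleftrightarrow> (\<forall>i\<ge>1. nu i \<le> mu i \<and> mu (Suc i) \<le> nu i)"

text \<open>Column-strict tableaux of shape lam (entries in 1..N): sequences T 0, ..., T N of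
  partitions (T k i = i-th part of lambda^(k)), T 0 empty, T N = lam, successive
  differences horizontal strips. Values outside k \<le> N, i \<ge> 1 are normalised to 0.\<close>
definition CST :: "nat \<Rightarrow> (nat \<Rightarrow> nat) \<Rightarrow> (nat \<Rightarrow> nat \<Rightarrow> nat) set" where
  "CST N lam = {T. (\<forall>k\<le>N. is_partition N (T k))
                 \<and> (\<forall>i. T 0 i = 0)
                 \<and> (\<forall>i\<ge>1. T N i = lam i)
                 \<and> (\<forall>k\<in>{1..N}. horizontal_strip (T k) (T (k - 1)))
                 \<and> (\<forall>k>N. \<forall>i. T k i = 0)}"

definition M :: "nat \<Rightarrow> (nat \<Rightarrow> nat \<Rightarrow> nat) set" where
  "M N = {\<theta>. \<forall>i j. \<not> (1 \<le> i \<and> i < j \<and> j \<le> N) \<longrightarrow> \<theta> i j = 0}"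

definition Pol :: "nat \<Rightarrow> (nat \<Rightarrow> nat) \<Rightarrow> (nat \<Rightarrow> nat \<Rightarrow> nat) set" where
  "Pol N lam = {\<theta> \<in> M N. \<forall>i j. 1 \<le> i \<and> i < j \<and> j \<le> N \<longrightarrow>
      int (\<theta> i j) \<le> int (lam i) - int (lam (Suc i))
                    - (\<Sum>k=j+1..N. int (\<theta> i k) - int (\<theta> (Suc i) k))}"

definition tab_to_mat :: "nat \<Rightarrow> (nat \<Rightarrow> nat \<Rightarrow> nat) \<Rightarrow> (nat \<Rightarrow> nat \<Rightarrow> nat)" where
  "tab_to_mat N T = (\<lambda>i j. if 1 \<le> i \<and> i < j \<and> j \<le> N then T j i - T (j - 1) i else 0)"

end

theory Submission
  imports Defs
begin

lemma tele:
  fixes f :: "nat \<Rightarrow> int"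
  assumes "k \<le> N"
  shows "(\<Sum>j=k+1..N. f j - f (j-1)) = f N - f k"
  using assms
proof (induction N)
  case 0 then show ?case by simp
next
  case (Suc N)
  show ?case
  proof (cases "k = Suc N")
    case True then show ?thesis by simp
  next
    case False
    then have "k \<le> N" using Suc.prems by simp
    then have "{k+1..Suc N} = insert (Suc N) {k+1..N}" by auto
    then show ?thesis using Suc.IH[OF \<open>k \<le> N\<close>] by simp
  qed
qed

lemma cst_vanish:
  assumes "T \<in> CST N lam"
  shows "k \<le> N \<Longrightarrow> k < i \<Longrightarrow> T k i = 0"
proof (induction k arbitrary: i)
  case 0 then show ?case using assms by (simp add: CST_def)
next
  case (Suc k)
  have hs0: "\<forall>k\<in>{1..N}. horizontal_strip (T k) (T (k - 1))" using assms by (simp add: CST_def)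
  have hs: "horizontal_strip (T (Suc k)) (T k)" using bspec[OF hs0, of "Suc k"] Suc.prems by simp
  obtain i' where i': "i = Suc i'" "i' \<ge> 1" "k < i'" using Suc.prems by (cases i) auto
  have "T (Suc k) (Suc i') \<le> T k i'" using hs i' by (simp add: horizontal_strip_def)
  moreover have "T k i' = 0" using Suc.IH[of i'] Suc.prems i' by simp
  ultimately show ?case using i' by simp
qed

lemma cst_mono:
  assumes "T \<in> CST N lam" "1 \<le> j" "j \<le> N" "1 \<le> i"
  shows "T (j-1) i \<le> T j i"
proof -
  have hs0: "\<forall>k\<in>{1..N}. horizontal_strip (T k) (T (k - 1))" using assms by (simp add: CST_def)
  have "horizontal_strip (T j) (T (j-1))" using bspec[OF hs0, of j] assms by simp
  then show ?thesis using assms by (simp add: horizontal_strip_def)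
qed

lemma cst_tele:
  assumes "T \<in> CST N lam" "k \<le> N" "1 \<le> i" "i \<le> k"
  shows "int (T k i) = int (lam i) - (\<Sum>j=k+1..N. int (tab_to_mat N T i j))"
proof -
  have "(\<Sum>j=k+1..N. int (tab_to_mat N T i j)) = (\<Sum>j=k+1..N. int (T j i) - int (T (j-1) i))"
  proof (rule sum.cong)
    fix j assume "j \<in> {k+1..N}"
    then have "1 \<le> i" "i < j" "j \<le> N" "1 \<le> j" using assms by auto
    then show "int (tab_to_mat N T i j) = int (T j i) - int (T (j-1) i)"
      using cst_mono[OF assms(1) \<open>1 \<le> j\<close> \<open>j \<le> N\<close> \<open>1 \<le> i\<close>]
      by (simp add: tab_to_mat_def of_nat_diff)
  qed simp
  also have "\<dots> = int (T N i) - int (T k i)"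
    using tele[OF assms(2), of "\<lambda>j. int (T j i)"] by simp
  also have "T N i = lam i" using assms by (simp add: CST_def)
  finally show ?thesis by simp
qed

lemma image_sub:
  assumes "T \<in> CST N lam"
  shows "tab_to_mat N T \<in> Pol N lam"
proof -
  have "tab_to_mat N T \<in> M N" by (simp add: M_def tab_to_mat_def)
  moreover have "int (tab_to_mat N T i j) \<le> int (lam i) - int (lam (Suc i))
                    - (\<Sum>k=j+1..N. int (tab_to_mat N T i k) - int (tab_to_mat N T (Suc i) k))"
    if h: "1 \<le> i" "i < j" "j \<le> N" for i j
  proof -
    have s: "(\<Sum>k=j+1..N. int (tab_to_mat N T i k) - int (tab_to_mat N T (Suc i) k))
       = (\<Sum>k=j+1..N. int (tab_to_mat N T i k)) - (\<Sum>k=j+1..N. int (tab_to_mat N T (Suc i) k))"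
      by (simp add: sum_subtractf)
    have a: "int (T j i) = int (lam i) - (\<Sum>k=j+1..N. int (tab_to_mat N T i k))"
      using cst_tele[OF assms, of j i] h by simp
    have b: "int (T j (Suc i)) = int (lam (Suc i)) - (\<Sum>k=j+1..N. int (tab_to_mat N T (Suc i) k))"
      using cst_tele[OF assms, of j "Suc i"] h by simp
    have hs0: "\<forall>k\<in>{1..N}. horizontal_strip (T k) (T (k - 1))" using assms by (simp add: CST_def)
    have hs: "horizontal_strip (T j) (T (j-1))" using bspec[OF hs0, of j] h by simp
    then have c: "T j (Suc i) \<le> T (j-1) i" using h by (simp add: horizontal_strip_def)
    have d: "T (j-1) i \<le> T j i" using cst_mono[OF assms, of j i] h by simp
    have "int (tab_to_mat N T i j) = int (T j i) - int (T (j-1) i)"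
      using h d by (simp add: tab_to_mat_def of_nat_diff)
    then show ?thesis using s a b c by linarith
  qed
  ultimately show ?thesis by (simp add: Pol_def)
qed

definition S :: "nat \<Rightarrow> (nat \<Rightarrow> nat) \<Rightarrow> (nat \<Rightarrow> nat \<Rightarrow> nat) \<Rightarrow> nat \<Rightarrow> nat \<Rightarrow> int" where
  "S N lam \<theta> k i = int (lam i) - (\<Sum>j=k+1..N. int (\<theta> i j))"

definition mtt :: "nat \<Rightarrow> (nat \<Rightarrow> nat) \<Rightarrow> (nat \<Rightarrow> nat \<Rightarrow> nat) \<Rightarrow> nat \<Rightarrow> nat \<Rightarrow> nat" where
  "mtt N lam \<theta> k i = (if k \<le> N \<and> 1 \<le> i \<and> i \<le> k then nat (S N lam \<theta> k i) else 0)"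

lemma S_split:
  assumes "1 \<le> k" "k \<le> N"
  shows "S N lam \<theta> (k-1) i = S N lam \<theta> k i - int (\<theta> i k)"
proof -
  have "{k-1+1..N} = insert k {k+1..N}" using assms by auto
  then show ?thesis by (simp add: S_def)
qed

lemma S_P:
  assumes "\<theta> \<in> Pol N lam" "1 \<le> i" "i + 1 \<le> k" "k \<le> N"
  shows "S N lam \<theta> k (Suc i) \<le> S N lam \<theta> (k-1) i"
proof -
  have "int (\<theta> i k) \<le> int (lam i) - int (lam (Suc i))
                    - (\<Sum>j=k+1..N. int (\<theta> i j) - int (\<theta> (Suc i) j))"
    using assms by (simp add: Pol_def)
  moreover have "(\<Sum>j=k+1..N. int (\<theta> i j) - int (\<theta> (Suc i) j))
     = (\<Sum>j=k+1..N. int (\<theta> i j)) - (\<Sum>j=k+1..N. int (\<theta> (Suc i) j))"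
    by (simp add: sum_subtractf)
  moreover have "S N lam \<theta> (k-1) i = S N lam \<theta> k i - int (\<theta> i k)"
    using S_split assms by simp
  ultimately show ?thesis by (simp add: S_def)
qed

lemma S_nonneg':
  assumes "\<theta> \<in> Pol N lam" "1 \<le> i" "i \<le> k" "k \<le> N"
  shows "0 \<le> S N lam \<theta> k i"
  using assms(4,2,3)
proof (induction k arbitrary: i rule: inc_induct)
  case base
  then show ?case by (simp add: S_def)
next
  case (step n)
  have "S N lam \<theta> (Suc n) (Suc i) \<le> S N lam \<theta> (Suc n - 1) i"
    using S_P[OF assms(1), of i "Suc n"] step.prems step.hyps by simp
  moreover have "0 \<le> S N lam \<theta> (Suc n) (Suc i)" using step.IH[of "Suc i"] step.prems by simp
  ultimately show ?case by simp
qed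

lemma S_mono:
  assumes "1 \<le> k" "k \<le> N"
  shows "S N lam \<theta> (k-1) i \<le> S N lam \<theta> k i"
  using S_split[OF assms] by simp

lemma surj_part:
  assumes "is_partition N lam" "\<theta> \<in> Pol N lam"
  shows "mtt N lam \<theta> \<in> CST N lam \<and> tab_to_mat N (mtt N lam \<theta>) = \<theta>"
proof -
  let ?T = "mtt N lam \<theta>"
  have M: "\<theta> \<in> M N" using assms by (simp add: Pol_def)
  have part: "is_partition N (?T k)" if "k \<le> N" for k
  proof -
    have "?T k (Suc i) \<le> ?T k i" if "i \<ge> 1" for i
    proof (cases "Suc i \<le> k")
      case True
      have "S N lam \<theta> k (Suc i) \<le> S N lam \<theta> (k-1) i" using S_P[OF assms(2), of i k] True that \<open>k \<le> N\<close> by simp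
      also have "\<dots> \<le> S N lam \<theta> k i" using S_mono[of k N] True \<open>k \<le> N\<close> by simp
      finally show ?thesis using True that \<open>k \<le> N\<close> by (simp add: mtt_def nat_mono)
    next
      case False then show ?thesis by (simp add: mtt_def)
    qed
    then show ?thesis using that by (auto simp: is_partition_def mtt_def)
  qed
  have hs: "horizontal_strip (?T k) (?T (k-1))" if "1 \<le> k" "k \<le> N" for k
    unfolding horizontal_strip_def
  proof (intro allI impI conjI)
    fix i :: nat assume i: "1 \<le> i"
    show "?T (k-1) i \<le> ?T k i"
    proof (cases "i \<le> k - 1")
      case True then show ?thesis using S_mono[OF that, of lam \<theta> i] i that
        by (simp add: mtt_def nat_mono)
    next
      case False then show ?thesis by (simp add: mtt_def)
    qed
    show "?T k (Suc i) \<le> ?T (k-1) i"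
    proof (cases "Suc i \<le> k")
      case True
      then have "i \<le> k - 1" "k - 1 \<le> N" using that by auto
      then show ?thesis using S_P[OF assms(2), of i k] i that True
        by (simp add: mtt_def nat_mono)
    next
      case False then show ?thesis by (simp add: mtt_def)
    qed
  qed
  have TN: "?T N i = lam i" if "i \<ge> 1" for i
  proof (cases "i \<le> N")
    case True then show ?thesis using that by (simp add: mtt_def S_def)
  next
    case False then show ?thesis using assms(1) by (simp add: mtt_def is_partition_def)
  qed
  have "?T \<in> CST N lam"
    unfolding CST_def using part hs TN by (auto simp: mtt_def)
  moreover have "tab_to_mat N ?T = \<theta>"
  proof (intro ext)
    fix i j
    show "tab_to_mat N ?T i j = \<theta> i j"
    proof (cases "1 \<le> i \<and> i < j \<and> j \<le> N")
      case True
      then have j1: "1 \<le> j" by simp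
      have e: "S N lam \<theta> (j-1) i = S N lam \<theta> j i - int (\<theta> i j)" using S_split[OF j1] True by simp
      have n1: "0 \<le> S N lam \<theta> (j-1) i" using S_nonneg'[OF assms(2), of i "j-1"] True by (metis One_nat_def diff_le_self le_trans less_Suc_eq_le Suc_pred less_imp_le_nat not_gr0 not_less0)
      have n2: "0 \<le> S N lam \<theta> j i" using S_nonneg'[OF assms(2), of i j] True by simp
      have "nat (S N lam \<theta> j i) - nat (S N lam \<theta> (j-1) i) = \<theta> i j"
        using e n1 n2 by linarith
      moreover have "i \<le> j - 1" "j - 1 \<le> N" using True by auto
      ultimately show ?thesis using True by (simp add: tab_to_mat_def mtt_def)
    next
      case False
      then have "tab_to_mat N ?T i j = 0" unfolding tab_to_mat_def by meson
      moreover have "\<theta> i j = 0" using M False unfolding M_def by blast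
      ultimately show ?thesis by simp
    qed
  qed
  ultimately show ?thesis by simp
qed

lemma inj_part:
  assumes "T1 \<in> CST N lam" "T2 \<in> CST N lam" "tab_to_mat N T1 = tab_to_mat N T2"
  shows "T1 = T2"
proof (intro ext)
  fix k i
  show "T1 k i = T2 k i"
  proof (cases "k \<le> N")
    case False then show ?thesis using assms by (simp add: CST_def)
  next
    case True
    show ?thesis
    proof (cases "i = 0")
      case True then show ?thesis using assms \<open>k \<le> N\<close> by (simp add: CST_def is_partition_def)
    next
      case False
      show ?thesis
      proof (cases "i \<le> k")
        case True
        then show ?thesis using cst_tele[OF assms(1) \<open>k \<le> N\<close>, of i] cst_tele[OF assms(2) \<open>k \<le> N\<close>, of i]
            \<open>i \<noteq> 0\<close> assms(3) by simp
      next
        case False then show ?thesis using cst_vanish[OF assms(1) \<open>k \<le> N\<close>] cst_vanish[OF assms(2) \<open>k \<le> N\<close>] by simp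
      qed
    qed
  qed
qed

theorem lemma2p1:
  assumes "is_partition N lam"
  shows "bij_betw (tab_to_mat N) (CST N lam) (Pol N lam)"
proof (rule bij_betw_imageI)
  show "inj_on (tab_to_mat N) (CST N lam)" using inj_part by (metis inj_onI)
  show "tab_to_mat N ` CST N lam = Pol N lam"
  proof
    show "tab_to_mat N ` CST N lam \<subseteq> Pol N lam" using image_sub by blast
    show "Pol N lam \<subseteq> tab_to_mat N ` CST N lam"
    proof
      fix \<theta> assume "\<theta> \<in> Pol N lam"
      then show "\<theta> \<in> tab_to_mat N ` CST N lam" using surj_part[OF assms] by (metis image_eqI)
    qed
  qed
qed

end
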